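(* Let $A\in\mathbb{R}^{n\times n}$, $T>0$, $\Omega=c+G\mathbf{B}_p\in\mathbb{A}_n$, $\epsilon\in[0,1)$, and $t\in[0,T]$ with $t\|A\|\le1$. Then $$\mathfrak{d}\bigl(\mathcal{H}(t,\Omega,\epsilon),\mathrm{e}^{tA}\Omega\bigr)\le\bigl(2(1-\epsilon)+(t\|A\|)^2\bigr)\mathrm{e}^{T\|A\|}\|\Omega\|.$$
   Context: A norm $\|\cdot\|$ is fixed on each $\mathbb{R}^k$, $\mathbf{B}_k$ its closed unit ball, matrices with induced norms; for a nonempty set $M$, $\|M\|=\sup_{x\in M}\|x\|$. $\mathfrak{d}$ is the Hausdorff distance w.r.t. $\|\cdot\|$. $G^\dagger$ is the Moore–Penrose inverse, $\rho(A)$ the spectral radius. $\mathbb{A}_n$: sets $c+G\mathbf{B}_p$ with $\mathrm{rank}(G)=n$, $G\in\mathbb{R}^{n\times p}$, regarded with representation $(c,G)$. $\mathcal{L}(t,k)=\sum_{j=0}^{k-1}(tA)^j/j!$, $\theta(r,k)=\sum_{j=k}^\infty r^j/j!$, $\lambda(t,\Omega,k)=\dfrac{1-\mathrm{e}^{t\|A\|}\theta(t\|A\|,k)\|G^\dagger\|\|c\|}{1+\mathrm{e}^{t\|A\|}\theta(t\|A\|,k)\|G^\dagger\|\|G\|}$, $k_{\min}(t)=\min\{k\in\mathbb{N}:\theta(t\rho(A),k)\mathrm{e}^{t\rho(A)}<1\}$, $\kappa(t,\Omega,\epsilon)=\min\{k\in\mathbb{N}:k\ge\max(k_{\min}(t),2),\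 \lambda(t,\Omega,k)>\epsilon\}$, and $\mathcal{H}(t,\Omega,\epsilon)=\mathcal{L}(t,\kappa)[c+\lambda(t,\Omega,\kappa)G\mathbf{B}_p]$ with $\kappa=\kappa(t,\Omega,\epsilon)$. *)

theory Defs
  imports "HOL-Analysis.Analysis"
begin

text \<open>A norm on a real vector space, given as a function (the paper fixes an
arbitrary norm on each R^k).\<close>
definition is_norm :: "('a::real_vector \<Rightarrow> real) \<Rightarrow> bool" where
  "is_norm N \<longleftrightarrow> (\<forall>x. N x = 0 \<longleftrightarrow> x = 0) \<and> (\<forall>a x. N (a *\<^sub>R x) = \<bar>a\<bar> * N x)
     \<and> (\<forall>x y. N (x + y) \<le> N x + N y)"

definition ind_norm :: "(real^'q \<Rightarrow> real) \<Rightarrow> (real^'m \<Rightarrow> real) \<Rightarrow> real^'q^'m \<Rightarrow> real" where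
  "ind_norm Nq Nm M = (SUP x\<in>{x. Nq x \<le> 1}. Nm (M *v x))"

definition set_norm :: "('a \<Rightarrow> real) \<Rightarrow> 'a set \<Rightarrow> real" where
  "set_norm N M = (SUP x\<in>M. N x)"

definition hdist :: "('a::real_vector \<Rightarrow> real) \<Rightarrow> 'a set \<Rightarrow> 'a set \<Rightarrow> real" where
  "hdist N X Y = max (SUP x\<in>X. INF y\<in>Y. N (x - y)) (SUP y\<in>Y. INF x\<in>X. N (x - y))"

definition unit_ball :: "('a \<Rightarrow> real) \<Rightarrow> 'a set" where
  "unit_ball N = {x. N x \<le> 1}"

primrec matpow :: "real^'n^'n \<Rightarrow> nat \<Rightarrow> real^'n^'n" where
  "matpow M 0 = mat 1"
| "matpow M (Suc j) = M ** matpow M j"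

definition mexp :: "real^'n^'n \<Rightarrow> real^'n^'n" where
  "mexp M = (\<Sum>j. (1 / fact j) *\<^sub>R matpow M j)"

definition mp_inverse :: "real^'p^'n \<Rightarrow> real^'n^'p" where
  "mp_inverse G = (THE X. G ** X ** G = G \<and> X ** G ** X = X \<and>
      transpose (G ** X) = G ** X \<and> transpose (X ** G) = X ** G)"

definition spectral_radius :: "real^'n^'n \<Rightarrow> real" where
  "spectral_radius A = Sup {cmod z | z. \<exists>v :: complex^'n. v \<noteq> 0 \<and>
      (\<chi> i j. complex_of_real (A $ i $ j)) *v v = z *s v}"

definition Lpoly :: "real^'n^'n \<Rightarrow> real \<Rightarrow> nat \<Rightarrow> real^'n^'n" where
  "Lpoly A t k = (\<Sum>j<k. (1 / fact j) *\<^sub>R matpow (t *\<^sub>R A) j)"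

definition theta :: "real \<Rightarrow> nat \<Rightarrow> real" where
  "theta r k = (\<Sum>j. r ^ (j + k) / fact (j + k))"

definition lam :: "(real^'n \<Rightarrow> real) \<Rightarrow> (real^'p \<Rightarrow> real) \<Rightarrow> real^'n^'n \<Rightarrow> real
                   \<Rightarrow> real^'n \<Rightarrow> real^'p^'n \<Rightarrow> nat \<Rightarrow> real" where
  "lam Nn Np A t c G k =
     (let a = ind_norm Nn Nn A; e = exp (t * a) * theta (t * a) k;
          gd = ind_norm Nn Np (mp_inverse G)
      in (1 - e * gd * Nn c) / (1 + e * gd * ind_norm Np Nn G))"

definition kmin :: "real^'n^'n \<Rightarrow> real \<Rightarrow> nat" where
  "kmin A t = (LEAST k. theta (t * spectral_radius A) k * exp (t * spectral_radius A) < 1)"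

definition kappa :: "(real^'n \<Rightarrow> real) \<Rightarrow> (real^'p \<Rightarrow> real) \<Rightarrow> real^'n^'n \<Rightarrow> real
                   \<Rightarrow> real^'n \<Rightarrow> real^'p^'n \<Rightarrow> real \<Rightarrow> nat" where
  "kappa Nn Np A t c G \<epsilon> =
     (LEAST k. k \<ge> max (kmin A t) 2 \<and> lam Nn Np A t c G k > \<epsilon>)"

definition Hset :: "(real^'n \<Rightarrow> real) \<Rightarrow> (real^'p \<Rightarrow> real) \<Rightarrow> real^'n^'n \<Rightarrow> real
                   \<Rightarrow> real^'n \<Rightarrow> real^'p^'n \<Rightarrow> real \<Rightarrow> (real^'n) set" where
  "Hset Nn Np A t c G \<epsilon> =
     (let k = kappa Nn Np A t c G \<epsilon>
      in (\<lambda>u. Lpoly A t k *v (c + lam Nn Np A t c G k *\<^sub>R (G *v u))) ` unit_ball Np)"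

end

theory Submission
  imports Defs
begin
lemma isn_zero: "is_norm N \<Longrightarrow> N 0 = 0" unfolding is_norm_def by blast
lemma isn_scale: "is_norm N \<Longrightarrow> N (a *\<^sub>R x) = \<bar>a\<bar> * N x" unfolding is_norm_def by blast
lemma isn_tri: "is_norm N \<Longrightarrow> N (x + y) \<le> N x + N y" unfolding is_norm_def by blast
lemma isn_eq0: "is_norm N \<Longrightarrow> N x = 0 \<longleftrightarrow> x = 0" unfolding is_norm_def by blast
lemma isn_minus: "is_norm N \<Longrightarrow> N (- x) = N x"
  using isn_scale[of N "-1" x] by simp
lemma isn_nonneg: "is_norm N \<Longrightarrow> 0 \<le> N x"
proof -
  assume n: "is_norm N"
  have "N (x + - x) \<le> N x + N (-x)" by (rule isn_tri[OF n])
  then show ?thesis using isn_zero[OF n] isn_minus[OF n, of x] by simp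
qed
lemma isn_diff: "is_norm N \<Longrightarrow> N (x - y) \<le> N x + N y"
  using isn_tri[of N x "-y"] isn_minus[of N y] by simp
lemma isn_rev: "is_norm N \<Longrightarrow> \<bar>N x - N y\<bar> \<le> N (x - y)"
proof -
  assume n: "is_norm N"
  have "N x \<le> N (x - y) + N y" using isn_tri[OF n, of "x - y" y] by simp
  moreover have "N y \<le> N (x - y) + N x" using isn_tri[OF n, of "y - x" x] isn_minus[OF n, of "x - y"] by simp
  ultimately show ?thesis by linarith
qed
lemma isn_sum: "is_norm N \<Longrightarrow> N (sum f S) \<le> (\<Sum>i\<in>S. N (f i))"
proof (induction S rule: infinite_finite_induct)
  case (infinite A) then show ?case by (simp add: isn_zero)
next
  case empty then show ?case by (simp add: isn_zero)
next
  case (insert x F)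
  then show ?case using isn_tri[OF insert(4), of "f x" "sum f F"] by simp
qed

lemma isn_upper:
  fixes N :: "'a::euclidean_space \<Rightarrow> real"
  assumes n: "is_norm N"
  shows "\<exists>C>0. \<forall>x. N x \<le> C * norm x"
proof -
  define C where "C = 1 + (\<Sum>b\<in>Basis. N b)"
  have C0: "(\<Sum>b\<in>Basis. N b) \<ge> 0" by (intro sum_nonneg isn_nonneg[OF n])
  have "N x \<le> C * norm x" for x
  proof -
    have "N x = N (\<Sum>b\<in>Basis. (x \<bullet> b) *\<^sub>R b)" by (simp add: euclidean_representation)
    also have "\<dots> \<le> (\<Sum>b\<in>Basis. N ((x \<bullet> b) *\<^sub>R b))" by (rule isn_sum[OF n])
    also have "\<dots> = (\<Sum>b\<in>Basis. \<bar>x \<bullet> b\<bar> * N b)" by (simp add: isn_scale[OF n])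
    also have "\<dots> \<le> (\<Sum>b\<in>Basis. norm x * N b)"
      by (intro sum_mono mult_right_mono isn_nonneg[OF n] Basis_le_norm) auto
    also have "\<dots> = norm x * (\<Sum>b\<in>Basis. N b)" by (simp add: sum_distrib_left)
    also have "\<dots> \<le> C * norm x" unfolding C_def by (simp add: algebra_simps)
    finally show ?thesis .
  qed
  moreover have "C > 0" unfolding C_def using C0 by simp
  ultimately show ?thesis by blast
qed

lemma isn_cont:
  fixes N :: "'a::euclidean_space \<Rightarrow> real"
  assumes n: "is_norm N"
  shows "continuous_on S N"
proof -
  obtain C where C: "C > 0" "\<forall>x. N x \<le> C * norm x" using isn_upper[OF n] by blast
  have "uniformly_continuous_on UNIV N"
    unfolding uniformly_continuous_on_def
  proof (intro allI impI)
    fix e :: real assume e: "e > 0"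
    show "\<exists>d>0. \<forall>x\<in>UNIV. \<forall>x'\<in>UNIV. dist x' x < d \<longrightarrow> dist (N x') (N x) < e"
    proof (intro exI[of _ "e / C"] conjI ballI impI)
      show "e / C > 0" using e C by simp
      fix x x' :: 'a assume "dist x' x < e / C"
      then have "C * norm (x' - x) < e" using C by (simp add: dist_norm field_simps)
      moreover have "\<bar>N x' - N x\<bar> \<le> C * norm (x' - x)" using isn_rev[OF n, of x' x] C(2)[rule_format, of "x' - x"] by linarith
      ultimately show "dist (N x') (N x) < e" by (simp add: dist_real_def)
    qed
  qed
  then show ?thesis using uniformly_continuous_imp_continuous continuous_on_subset by blast
qed

lemma isn_lower:
  fixes N :: "'a::euclidean_space \<Rightarrow> real"
  assumes n: "is_norm N"
  shows "\<exists>D>0. \<forall>x. norm x \<le> D * N x"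
proof -
  have ne: "sphere (0::'a) 1 \<noteq> {}"
    using SOME_Basis norm_Basis by (metis mem_sphere_0 empty_iff)
  obtain m where m: "m \<in> sphere (0::'a) 1" "\<forall>y\<in>sphere 0 1. N m \<le> N y"
    using continuous_attains_inf[OF compact_sphere ne isn_cont[OF n]] by blast
  have "m \<noteq> 0" using m(1) by auto
  then have mp: "N m > 0" using isn_eq0[OF n, of m] isn_nonneg[OF n, of m] by linarith
  have "norm x \<le> (1 / N m) * N x" for x
  proof (cases "x = 0")
    case True then show ?thesis by (simp add: isn_zero[OF n])
  next
    case False
    have "N m \<le> N ((1 / norm x) *\<^sub>R x)" using m(2) False by simp
    also have "\<dots> = N x / norm x" using isn_scale[OF n] by simp
    finally show ?thesis using False mp by (simp add: field_simps)
  qed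
  then show ?thesis using mp by (intro exI[of _ "1 / N m"]) auto
qed

lemma ind_bdd:
  fixes N1 :: "real^'q \<Rightarrow> real" and N2 :: "real^'m \<Rightarrow> real" and M :: "real^'q^'m"
  assumes n1: "is_norm N1" and n2: "is_norm N2"
  shows "\<exists>B\<ge>0. \<forall>x. N2 (M *v x) \<le> B * N1 x"
proof -
  obtain C where C: "C > 0" "\<forall>x. N2 x \<le> C * norm x" using isn_upper[OF n2] by blast
  obtain D where D: "D > 0" "\<forall>x. norm x \<le> D * N1 x" using isn_lower[OF n1] by blast
  obtain K where K: "\<forall>x. norm (M *v x) \<le> norm x * K" "K > 0"
    using bounded_linear.pos_bounded[OF matrix_vector_mul_bounded_linear[of M]] by blast
  have K0: "K \<ge> 0" using K by simp
  have "N2 (M *v x) \<le> (C * K * D) * N1 x" for x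
  proof -
    have "N2 (M *v x) \<le> C * norm (M *v x)" using C by blast
    also have "\<dots> \<le> C * (norm x * K)" using K C by (simp add: mult_left_mono)
    also have "\<dots> \<le> C * ((D * N1 x) * K)" using D C K0
      by (intro mult_left_mono mult_right_mono) auto
    finally show ?thesis by (simp add: algebra_simps)
  qed
  then show ?thesis using C D K0 by (intro exI[of _ "C * K * D"]) auto
qed

lemma ind_props:
  fixes N1 :: "real^'q \<Rightarrow> real" and N2 :: "real^'m \<Rightarrow> real" and M :: "real^'q^'m"
  assumes n1: "is_norm N1" and n2: "is_norm N2"
  shows "0 \<le> ind_norm N1 N2 M" and "N2 (M *v x) \<le> ind_norm N1 N2 M * N1 x"
proof -
  obtain B where B: "\<forall>x. N2 (M *v x) \<le> B * N1 x" "B \<ge> 0" using ind_bdd[OF n1 n2] by blast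
  have bdd: "bdd_above ((\<lambda>x. N2 (M *v x)) ` {x. N1 x \<le> 1})"
  proof (rule bdd_aboveI2)
    fix x assume "x \<in> {x. N1 x \<le> 1}"
    then have "N1 x \<le> 1" by simp
    moreover have "B \<ge> 0" using B by simp
    ultimately show "N2 (M *v x) \<le> B" using B(1)[rule_format, of x] isn_nonneg[OF n1, of x]
      by (smt (verit) mult_left_le)
  qed
  have up: "N2 (M *v x) \<le> ind_norm N1 N2 M" if "N1 x \<le> 1" for x
    unfolding ind_norm_def by (rule cSUP_upper[OF _ bdd]) (use that in simp)
  show "0 \<le> ind_norm N1 N2 M" using up[of 0] by (simp add: isn_zero[OF n1] isn_zero[OF n2])
  show "N2 (M *v x) \<le> ind_norm N1 N2 M * N1 x"
  proof (cases "x = 0")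
    case True then show ?thesis by (simp add: isn_zero[OF n1] isn_zero[OF n2])
  next
    case False
    then have p: "N1 x > 0" using isn_eq0[OF n1, of x] isn_nonneg[OF n1, of x] by linarith
    have "N1 ((1 / N1 x) *\<^sub>R x) = 1" using p by (simp add: isn_scale[OF n1])
    then have "N2 (M *v ((1 / N1 x) *\<^sub>R x)) \<le> ind_norm N1 N2 M" using up by simp
    then have "N2 (M *v x) / N1 x \<le> ind_norm N1 N2 M"
      using p by (simp add: matrix_vector_mult_scaleR isn_scale[OF n2])
    then show ?thesis using p by (simp add: field_simps)
  qed
qed

lemma smat_vec: "((t::real) *\<^sub>R (A::real^'n^'m)) *v v = t *\<^sub>R (A *v v)"
  by (simp add: matrix_vector_mult_def vec_eq_iff sum_distrib_left algebra_simps)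

lemma bl_mv: "bounded_linear (\<lambda>M::real^'n^'m. M *v v)"
proof -
  have "linear (\<lambda>M::real^'n^'m. M *v v)"
    by (rule linearI) (simp_all add: matrix_vector_mult_add_rdistrib smat_vec)
  then show ?thesis by (simp add: linear_conv_bounded_linear)
qed

lemma mp_bound:
  fixes N :: "real^'n \<Rightarrow> real" and A :: "real^'n^'n"
  assumes n: "is_norm N" and t: "t \<ge> 0"
  shows "N (matpow (t *\<^sub>R A) j *v v) \<le> (t * ind_norm N N A)^j * N v"
proof (induction j)
  case 0 then show ?case by simp
next
  case (Suc j)
  have a0: "0 \<le> ind_norm N N A" using ind_props(1)[OF n n] .
  have "N (matpow (t *\<^sub>R A) (Suc j) *v v) = t * N (A *v (matpow (t *\<^sub>R A) j *v v))"
    using t by (simp add: matrix_vector_mul_assoc[symmetric] smat_vec isn_scale[OF n])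
  also have "\<dots> \<le> t * (ind_norm N N A * N (matpow (t *\<^sub>R A) j *v v))"
    using t ind_props(2)[OF n n] by (simp add: mult_left_mono)
  also have "\<dots> \<le> t * (ind_norm N N A * ((t * ind_norm N N A)^j * N v))"
    using t a0 Suc.IH by (intro mult_left_mono) auto
  finally show ?case by (simp add: algebra_simps)
qed

lemma mat_norm_cols:
  fixes M :: "real^'n^'m"
  shows "norm M \<le> (\<Sum>i\<in>(UNIV::'m set). \<Sum>j\<in>UNIV. norm (M *v axis j 1))"
proof -
  have "norm M \<le> (\<Sum>i\<in>UNIV. norm (M $ i))"
    unfolding norm_vec_def by (rule L2_set_le_sum) simp
  also have "\<dots> \<le> (\<Sum>i\<in>UNIV. \<Sum>j\<in>UNIV. \<bar>M $ i $ j\<bar>)"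
    by (intro sum_mono norm_le_l1_cart)
  also have "\<dots> \<le> (\<Sum>i\<in>(UNIV::'m set). \<Sum>j\<in>UNIV. norm (M *v axis j 1))"
  proof (rule sum_mono, rule sum_mono)
    fix i j
    have "(M *v axis j 1) $ i = M $ i $ j"
      by (metis cart_eq_inner_axis matrix_vector_mul_component)
    then show "\<bar>M $ i $ j\<bar> \<le> norm (M *v axis j 1)" by (metis component_le_norm_cart)
  qed
  finally show ?thesis .
qed

lemma mexp_summable:
  fixes N :: "real^'n \<Rightarrow> real" and A :: "real^'n^'n"
  assumes n: "is_norm N" and t: "t \<ge> 0"
  shows "summable (\<lambda>j. (1 / fact j) *\<^sub>R matpow (t *\<^sub>R A) j)"
proof -
  define r where "r = t * ind_norm N N A"
  obtain D where D: "D > 0" "\<forall>x. norm x \<le> D * N x" using isn_lower[OF n] by blast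
  define K where "K = (\<Sum>i\<in>(UNIV::'n set). \<Sum>j\<in>(UNIV::'n set). D * N (axis j (1::real)))"
  have bnd: "norm ((1 / fact k) *\<^sub>R matpow (t *\<^sub>R A) k) \<le> K * (inverse (fact k) * r ^ k)" for k
  proof -
    have "norm (matpow (t *\<^sub>R A) k) \<le> (\<Sum>i\<in>(UNIV::'n set). \<Sum>j\<in>(UNIV::'n set). norm (matpow (t *\<^sub>R A) k *v axis j 1))"
      by (rule mat_norm_cols)
    also have "\<dots> \<le> (\<Sum>i\<in>(UNIV::'n set). \<Sum>j\<in>(UNIV::'n set). D * N (axis j (1::real)) * r ^ k)"
    proof (rule sum_mono, rule sum_mono)
      fix i j :: 'n
      have "norm (matpow (t *\<^sub>R A) k *v axis j 1) \<le> D * N (matpow (t *\<^sub>R A) k *v axis j 1)"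
        using D by blast
      also have "\<dots> \<le> D * (r ^ k * N (axis j 1))"
        using mp_bound[OF n t, of A k "axis j 1"] D unfolding r_def by (intro mult_left_mono) auto
      finally show "norm (matpow (t *\<^sub>R A) k *v axis j 1) \<le> D * N (axis j (1::real)) * r ^ k"
        by (simp add: algebra_simps)
    qed
    also have "\<dots> = K * r ^ k" unfolding K_def by (simp only: sum_distrib_right)
    finally have "norm (matpow (t *\<^sub>R A) k) \<le> K * r ^ k" .
    then have "inverse (fact k) * norm (matpow (t *\<^sub>R A) k) \<le> inverse (fact k) * (K * r ^ k)"
      by (rule mult_left_mono) simp
    moreover have "norm ((1 / fact k) *\<^sub>R matpow (t *\<^sub>R A) k) = inverse (fact k) * norm (matpow (t *\<^sub>R A) k)"
      by (simp add: divide_inverse)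
    ultimately show ?thesis by (simp only: mult.left_commute[of K])
  qed
  have sK: "summable (\<lambda>k. K * (inverse (fact k) * r ^ k))"
    by (intro summable_mult summable_exp)
  show ?thesis by (rule summable_comparison_test'[OF sK bnd])
qed

lemma isn_lim_le:
  fixes N :: "'a::euclidean_space \<Rightarrow> real"
  assumes n: "is_norm N" and s: "g sums s" and b: "\<And>m. N (\<Sum>j<m. g j) \<le> B"
  shows "N s \<le> B"
proof -
  have "(\<lambda>m. \<Sum>j<m. g j) \<longlonglongrightarrow> s" using s by (simp add: sums_def)
  then have "(\<lambda>m. N (\<Sum>j<m. g j)) \<longlonglongrightarrow> N s"
    by (rule isCont_tendsto_compose[rotated]) (use isn_cont[OF n, of UNIV] in \<open>simp add: continuous_on_eq_continuous_at\<close>)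
  then show ?thesis by (rule LIMSEQ_le_const2) (use b in auto)
qed

lemma exp_partial_le:
  assumes "(r::real) \<ge> 0"
  shows "(\<Sum>j<m. r ^ j / fact j) \<le> exp r"
proof -
  have e: "(\<lambda>n. r ^ n / fact n) sums exp r"
    using exp_converges[of r] by (simp add: divide_inverse_commute scaleR_conv_of_real mult.commute divide_inverse)
  show ?thesis
    using sum_le_suminf[OF sums_summable[OF e], of "{..<m}"] assms sums_unique[OF e] by auto
qed

context
  fixes N :: "real^'n \<Rightarrow> real" and A :: "real^'n^'n" and t :: real
  assumes n: "is_norm N" and t: "t \<ge> 0"
begin

definition "fv v j = (1 / fact j) *\<^sub>R (matpow (t *\<^sub>R A) j *v v)"

lemma fv_sums: "fv v sums (mexp (t *\<^sub>R A) *v v)"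
proof -
  have "(\<lambda>j. (1 / fact j) *\<^sub>R matpow (t *\<^sub>R A) j) sums mexp (t *\<^sub>R A)"
    unfolding mexp_def using mexp_summable[OF n t, of A] by (simp add: summable_sums)
  from bounded_linear.sums[OF bl_mv this, of v] show ?thesis
    unfolding fv_def by (simp add: smat_vec)
qed

lemma fv_L: "Lpoly A t k *v v = (\<Sum>j<k. fv v j)"
  unfolding Lpoly_def fv_def
  by (simp add: linear_sum[OF bounded_linear.linear[OF bl_mv]] smat_vec)

lemma fv_bound: "N (fv v j) \<le> (t * ind_norm N N A) ^ j / fact j * N v"
proof -
  have "N (fv v j) = (1 / fact j) * N (matpow (t *\<^sub>R A) j *v v)"
    unfolding fv_def by (simp add: isn_scale[OF n])
  also have "\<dots> \<le> (1 / fact j) * ((t * ind_norm N N A) ^ j * N v)"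
    by (rule mult_left_mono[OF mp_bound[OF n t]]) simp
  finally show ?thesis by simp
qed

lemma E_bound: "N (mexp (t *\<^sub>R A) *v v) \<le> exp (t * ind_norm N N A) * N v"
proof (rule isn_lim_le[OF n fv_sums])
  fix m
  define r where "r = t * ind_norm N N A"
  have r0: "r \<ge> 0" unfolding r_def using t ind_props(1)[OF n n] by simp
  have pw: "N (fv v j) \<le> r ^ j / fact j * N v" for j using fv_bound[of v j] unfolding r_def .
  have "N (\<Sum>j<m. fv v j) \<le> (\<Sum>j<m. N (fv v j))" by (rule isn_sum[OF n])
  also have "\<dots> \<le> (\<Sum>j<m. r ^ j / fact j * N v)"
    by (intro sum_mono pw)
  also have "\<dots> = (\<Sum>j<m. r ^ j / fact j) * N v" by (simp add: sum_distrib_right)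
  also have "\<dots> \<le> exp r * N v"
    by (rule mult_right_mono[OF exp_partial_le[OF r0] isn_nonneg[OF n]])
  finally show "N (\<Sum>j<m. fv v j) \<le> exp (t * ind_norm N N A) * N v" unfolding r_def .
qed

lemma EL_bound:
  assumes k: "k \<ge> 2" and r1: "t * ind_norm N N A \<le> 1"
  shows "N (Lpoly A t k *v v - mexp (t *\<^sub>R A) *v v)
           \<le> (t * ind_norm N N A)^2 * exp (t * ind_norm N N A) * N v"
proof -
  define r where "r = t * ind_norm N N A"
  have r0: "r \<ge> 0" unfolding r_def using t ind_props(1)[OF n n] by simp
  have r1': "r \<le> 1" using r1 unfolding r_def .
  have s: "(\<lambda>j. fv v (j + k)) sums (mexp (t *\<^sub>R A) *v v - (\<Sum>j<k. fv v j))"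
    by (rule sums_split_initial_segment[OF fv_sums])
  have "N (mexp (t *\<^sub>R A) *v v - (\<Sum>j<k. fv v j)) \<le> r^2 * exp r * N v"
  proof (rule isn_lim_le[OF n s])
    fix m
    have "N (\<Sum>j<m. fv v (j + k)) \<le> (\<Sum>j<m. N (fv v (j + k)))" by (rule isn_sum[OF n])
    also have "\<dots> \<le> (\<Sum>j<m. r^2 * (r ^ j / fact j) * N v)"
    proof (intro sum_mono)
      fix j
      have p: "r ^ (j + k) \<le> r^2 * r ^ j"
      proof -
        have e: "j + k = 2 + (j + (k - 2))" using k by simp
        have "r ^ (j + k) = r^2 * r ^ (j + (k - 2))" by (subst e, rule power_add)
        also have "\<dots> \<le> r^2 * r ^ j"
          by (intro mult_left_mono power_decreasing) (use r0 r1' in auto)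
        finally show ?thesis .
      qed
      have f: "fact j \<le> (fact (j + k) :: real)" by (intro fact_mono) simp
      have "r ^ (j + k) / fact (j + k) \<le> r^2 * r ^ j / fact j"
        using p f r0 by (intro frac_le) auto
      then have "r ^ (j + k) / fact (j + k) * N v \<le> r^2 * (r ^ j / fact j) * N v"
        by (intro mult_right_mono isn_nonneg[OF n]) auto
      then show "N (fv v (j + k)) \<le> r^2 * (r ^ j / fact j) * N v"
        using fv_bound[of v "j + k"] unfolding r_def by linarith
    qed
    also have "\<dots> = r^2 * (\<Sum>j<m. r ^ j / fact j) * N v"
      by (simp add: sum_distrib_left sum_distrib_right mult.assoc)
    also have "\<dots> \<le> r^2 * exp r * N v"
      by (intro mult_right_mono mult_left_mono exp_partial_le r0 isn_nonneg[OF n]) auto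
    finally show "N (\<Sum>j<m. fv v (j + k)) \<le> r^2 * exp r * N v" .
  qed
  moreover have "Lpoly A t k *v v - mexp (t *\<^sub>R A) *v v = - (mexp (t *\<^sub>R A) *v v - (\<Sum>j<k. fv v j))"
    by (simp add: fv_L)
  ultimately show ?thesis unfolding r_def by (metis isn_minus[OF n])
qed

end

lemma exp_sums_real: "(\<lambda>n. (r::real) ^ n / fact n) sums exp r"
  using exp_converges[of r] by (simp add: divide_inverse_commute scaleR_conv_of_real mult.commute divide_inverse)

lemma theta_eq: "theta r k = exp r - (\<Sum>j<k. r ^ j / fact j)"
proof -
  have "(\<lambda>j. r ^ (j + k) / fact (j + k)) sums (exp r - (\<Sum>j<k. r ^ j / fact j))"
    by (rule sums_split_initial_segment[OF exp_sums_real])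
  then show ?thesis unfolding theta_def by (simp add: sums_unique[symmetric])
qed

lemma theta_nonneg: "r \<ge> 0 \<Longrightarrow> theta r k \<ge> 0"
  unfolding theta_eq using exp_partial_le by simp

lemma theta_lim: "(\<lambda>k. theta r k) \<longlonglongrightarrow> 0"
proof -
  have "(\<lambda>k. \<Sum>j<k. r ^ j / fact j) \<longlonglongrightarrow> exp r" using exp_sums_real[of r] by (simp add: sums_def)
  then have "(\<lambda>k. exp r - (\<Sum>j<k. r ^ j / fact j)) \<longlonglongrightarrow> exp r - exp r"
    by (intro tendsto_intros)
  then show ?thesis unfolding theta_eq by simp
qed

lemma kappa_props:
  fixes Nn :: "real^'n \<Rightarrow> real" and Np :: "real^'p \<Rightarrow> real"
    and A :: "real^'n^'n" and c :: "real^'n" and G :: "real^'p^'n"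
  assumes nn: "is_norm Nn" and np: "is_norm Np" and t: "t \<ge> 0" and e1: "\<epsilon> < 1"
  shows "kappa Nn Np A t c G \<epsilon> \<ge> 2" and "lam Nn Np A t c G (kappa Nn Np A t c G \<epsilon>) > \<epsilon>"
    and "lam Nn Np A t c G k \<le> 1"
proof -
  define r where "r = t * ind_norm Nn Nn A"
  define gd where "gd = ind_norm Nn Np (mp_inverse G)"
  define gG where "gG = ind_norm Np Nn G"
  have r0: "r \<ge> 0" unfolding r_def using t ind_props(1)[OF nn nn] by simp
  have gd0: "gd \<ge> 0" unfolding gd_def using ind_props(1)[OF nn np] by simp
  have gG0: "gG \<ge> 0" unfolding gG_def using ind_props(1)[OF np nn] by simp
  have c0: "Nn c \<ge> 0" by (rule isn_nonneg[OF nn])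
  have lam_eq: "lam Nn Np A t c G k = (1 - exp r * theta r k * gd * Nn c) / (1 + exp r * theta r k * gd * gG)" for k
    unfolding lam_def Let_def r_def gd_def gG_def ..
  have th: "(\<lambda>k. exp r * theta r k * gd) \<longlonglongrightarrow> exp r * 0 * gd"
    by (rule tendsto_mult_right[OF tendsto_mult_left[OF theta_lim]])
  have num: "(\<lambda>k. 1 - exp r * theta r k * gd * Nn c) \<longlonglongrightarrow> 1 - exp r * 0 * gd * Nn c"
    by (rule tendsto_diff[OF tendsto_const tendsto_mult_right[OF th]])
  have den: "(\<lambda>k. 1 + exp r * theta r k * gd * gG) \<longlonglongrightarrow> 1 + exp r * 0 * gd * gG"
    by (rule tendsto_add[OF tendsto_const tendsto_mult_right[OF th]])
  have "(\<lambda>k. lam Nn Np A t c G k) \<longlonglongrightarrow> (1 - exp r * 0 * gd * Nn c) / (1 + exp r * 0 * gd * gG)"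
    unfolding lam_eq by (rule tendsto_divide[OF num den]) simp
  then have "(\<lambda>k. lam Nn Np A t c G k) \<longlonglongrightarrow> 1" by simp
  then have ev: "eventually (\<lambda>k. \<epsilon> < lam Nn Np A t c G k) sequentially"
    using e1 by (rule order_tendstoD(1))
  moreover have "eventually (\<lambda>k. k \<ge> max (kmin A t) 2) sequentially" by (rule eventually_ge_at_top)
  ultimately have "eventually (\<lambda>k. \<epsilon> < lam Nn Np A t c G k \<and> k \<ge> max (kmin A t) 2) sequentially"
    by (rule eventually_conj)
  then obtain M where M: "\<And>k. k \<ge> M \<Longrightarrow> \<epsilon> < lam Nn Np A t c G k \<and> k \<ge> max (kmin A t) 2"
    unfolding eventually_sequentially by blast
  have "M \<ge> max (kmin A t) 2 \<and> lam Nn Np A t c G M > \<epsilon>" using M[of M] by simp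
  then have P: "kappa Nn Np A t c G \<epsilon> \<ge> max (kmin A t) 2 \<and> lam Nn Np A t c G (kappa Nn Np A t c G \<epsilon>) > \<epsilon>"
    unfolding kappa_def by (rule LeastI)
  then show "kappa Nn Np A t c G \<epsilon> \<ge> 2" and "lam Nn Np A t c G (kappa Nn Np A t c G \<epsilon>) > \<epsilon>" by auto
  have s0: "exp r * theta r k * gd \<ge> 0" using theta_nonneg[OF r0] gd0 by simp
  then have "exp r * theta r k * gd * Nn c \<ge> 0" "exp r * theta r k * gd * gG \<ge> 0"
    using c0 gG0 by simp_all
  then show "lam Nn Np A t c G k \<le> 1" unfolding lam_eq by (intro divide_le_eq_1_pos[THEN iffD2]) auto
qed

lemma inf_le_wit:
  fixes f :: "'a \<Rightarrow> real"
  assumes "y0 \<in> Y" "f y0 \<le> B" "\<And>y. 0 \<le> f y"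
  shows "(INF y\<in>Y. f y) \<le> B"
proof -
  have "bdd_below (f ` Y)" using assms(3) by (intro bdd_belowI2) auto
  then have "(INF y\<in>Y. f y) \<le> f y0" using assms(1) by (rule cINF_lower)
  then show ?thesis using assms(2) by linarith
qed

theorem lemma12:
  fixes Nn :: "real^'n \<Rightarrow> real" and Np :: "real^'p \<Rightarrow> real"
    and A :: "real^'n^'n" and c :: "real^'n" and G :: "real^'p^'n"
    and T t \<epsilon> :: real
  assumes "is_norm Nn" and "is_norm Np"
    and "rank G = CARD('n)"
    and "T > 0"
    and "0 \<le> \<epsilon>" and "\<epsilon> < 1"
    and "0 \<le> t" and "t \<le> T"
    and "t * ind_norm Nn Nn A \<le> 1"
  shows "hdist Nn (Hset Nn Np A t c G \<epsilon>)
             ((\<lambda>x. mexp (t *\<^sub>R A) *v x) ` ((\<lambda>u. c + G *v u) ` unit_ball Np))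
         \<le> (2 * (1 - \<epsilon>) + (t * ind_norm Nn Nn A)^2) * exp (T * ind_norm Nn Nn A)
             * set_norm Nn ((\<lambda>u. c + G *v u) ` unit_ball Np)"
proof -
  note nn = assms(1) and np = assms(2) and t0 = assms(7)
  define a where "a = ind_norm Nn Nn A"
  define r where "r = t * a"
  define k0 where "k0 = kappa Nn Np A t c G \<epsilon>"
  define l where "l = lam Nn Np A t c G k0"
  define E where "E = mexp (t *\<^sub>R A)"
  define L where "L = Lpoly A t k0"
  define \<Omega> where "\<Omega> = (\<lambda>u. c + G *v u) ` unit_ball Np"
  define R where "R = set_norm Nn \<Omega>"
  define gG where "gG = ind_norm Np Nn G"
  have a0: "a \<ge> 0" unfolding a_def using ind_props(1)[OF nn nn] .
  have r0: "r \<ge> 0" unfolding r_def using a0 t0 by simp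
  have r1: "r \<le> 1" unfolding r_def a_def using assms(9) .
  have k2: "k0 \<ge> 2" unfolding k0_def using kappa_props(1)[OF nn np t0 assms(6)] .
  have le: "\<epsilon> < l" unfolding l_def k0_def using kappa_props(2)[OF nn np t0 assms(6)] .
  have l1: "l \<le> 1" unfolding l_def using kappa_props(3)[OF nn np t0 assms(6)] .
  have l0: "l \<ge> 0" using le assms(5) by linarith
  have H: "Hset Nn Np A t c G \<epsilon> = (\<lambda>u. L *v (c + l *\<^sub>R (G *v u))) ` unit_ball Np"
    unfolding Hset_def Let_def L_def l_def k0_def ..
  have ub0: "0 \<in> unit_ball Np" unfolding unit_ball_def by (simp add: isn_zero[OF np])
  have ubl: "l *\<^sub>R u \<in> unit_ball Np" if "u \<in> unit_ball Np" for u
  proof -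
    have "Np (l *\<^sub>R u) = l * Np u" using l0 by (simp add: isn_scale[OF np])
    also have "\<dots> \<le> 1 * 1" using that l0 l1 isn_nonneg[OF np, of u] unfolding unit_ball_def
      by (intro mult_mono) auto
    finally show ?thesis unfolding unit_ball_def by simp
  qed
  have bdd: "bdd_above (Nn ` \<Omega>)"
  proof (rule bdd_aboveI2)
    fix x assume "x \<in> \<Omega>"
    then obtain u where u: "u \<in> unit_ball Np" "x = c + G *v u" unfolding \<Omega>_def by blast
    have "Nn x \<le> Nn c + Nn (G *v u)" using u(2) isn_tri[OF nn] by simp
    also have "\<dots> \<le> Nn c + gG * Np u" unfolding gG_def using ind_props(2)[OF np nn] by simp
    also have "\<dots> \<le> Nn c + gG * 1"
      using u(1) ind_props(1)[OF np nn] unfolding unit_ball_def gG_def by (intro add_left_mono mult_left_mono) auto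
    finally show "Nn x \<le> Nn c + gG * 1" .
  qed
  have inO: "Nn (c + G *v u) \<le> R" if "u \<in> unit_ball Np" for u
    unfolding R_def set_norm_def by (rule cSUP_upper[OF _ bdd]) (use that in \<open>simp add: \<Omega>_def\<close>)
  have cR: "Nn c \<le> R" using inO[OF ub0] by simp
  have R0: "R \<ge> 0" using cR isn_nonneg[OF nn, of c] by linarith
  have wR: "Nn (c + l *\<^sub>R (G *v u)) \<le> R" if "u \<in> unit_ball Np" for u
  proof -
    have "c + l *\<^sub>R (G *v u) = (1 - l) *\<^sub>R c + l *\<^sub>R (c + G *v u)" by (simp add: algebra_simps)
    then have "Nn (c + l *\<^sub>R (G *v u)) \<le> Nn ((1 - l) *\<^sub>R c) + Nn (l *\<^sub>R (c + G *v u))"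
      using isn_tri[OF nn] by simp
    also have "\<dots> = (1 - l) * Nn c + l * Nn (c + G *v u)" using l0 l1 by (simp add: isn_scale[OF nn])
    also have "\<dots> \<le> (1 - l) * R + l * R"
      using l0 l1 cR inO[OF that] by (intro add_mono mult_left_mono) auto
    finally show ?thesis by (simp add: algebra_simps)
  qed
  have GR: "Nn (G *v u) \<le> 2 * R" if "u \<in> unit_ball Np" for u
  proof -
    have "Nn (G *v u) = Nn ((c + G *v u) - c)" by simp
    also have "\<dots> \<le> Nn (c + G *v u) + Nn c" by (rule isn_diff[OF nn])
    finally show ?thesis using inO[OF that] cR by linarith
  qed
  have ELb: "Nn (L *v w - E *v w) \<le> r^2 * exp r * Nn w" for w
    unfolding L_def E_def r_def a_def using EL_bound[OF nn t0 k2 assms(9)] .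
  have Eb: "Nn (E *v w) \<le> exp r * Nn w" for w
    unfolding E_def r_def a_def using E_bound[OF nn t0] .
  define B where "B = r^2 * exp r * R + exp r * (2 * (1 - \<epsilon>) * R)"
  have B0: "B \<ge> 0" unfolding B_def using R0 assms(6) by simp
  have nonneg: "\<And>z. 0 \<le> Nn z" by (rule isn_nonneg[OF nn])
  have S1: "(SUP x\<in>Hset Nn Np A t c G \<epsilon>. INF y\<in>(\<lambda>x. E *v x) ` \<Omega>. Nn (x - y)) \<le> B"
  proof (rule cSUP_least)
    show "Hset Nn Np A t c G \<epsilon> \<noteq> {}" unfolding H using ub0 by blast
    fix x assume "x \<in> Hset Nn Np A t c G \<epsilon>"
    then obtain u where u: "u \<in> unit_ball Np" "x = L *v (c + l *\<^sub>R (G *v u))" unfolding H by blast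
    define w where "w = c + l *\<^sub>R (G *v u)"
    have "w = c + G *v (l *\<^sub>R u)" unfolding w_def by (simp add: matrix_vector_mult_scaleR)
    then have "w \<in> \<Omega>" unfolding \<Omega>_def using ubl[OF u(1)] by blast
    then have wO: "E *v w \<in> (\<lambda>x. E *v x) ` \<Omega>" by (rule imageI)
    have "Nn (x - E *v w) \<le> r^2 * exp r * Nn w" using ELb u(2) unfolding w_def by simp
    also have "\<dots> \<le> r^2 * exp r * R" using wR[OF u(1)] unfolding w_def by (intro mult_left_mono) auto
    also have "\<dots> \<le> B" unfolding B_def using R0 assms(6) by simp
    finally show "(INF y\<in>(\<lambda>x. E *v x) ` \<Omega>. Nn (x - y)) \<le> B"
      by (rule inf_le_wit[OF wO _ nonneg])
  qed
  have S2: "(SUP y\<in>(\<lambda>x. E *v x) ` \<Omega>. INF x\<in>Hset Nn Np A t c G \<epsilon>. Nn (x - y)) \<le> B"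
  proof (rule cSUP_least)
    show "(\<lambda>x. E *v x) ` \<Omega> \<noteq> {}" unfolding \<Omega>_def using ub0 by blast
    fix y assume "y \<in> (\<lambda>x. E *v x) ` \<Omega>"
    then obtain u where u: "u \<in> unit_ball Np" "y = E *v (c + G *v u)" unfolding \<Omega>_def by blast
    define w where "w = c + l *\<^sub>R (G *v u)"
    have xH: "L *v w \<in> Hset Nn Np A t c G \<epsilon>" unfolding H w_def using u(1) by blast
    have eq: "L *v w - y = (L *v w - E *v w) + E *v ((l - 1) *\<^sub>R (G *v u))"
      unfolding u(2) w_def by (simp add: algebra_simps matrix_vector_mult_scaleR)
    have "Nn (L *v w - y) \<le> Nn (L *v w - E *v w) + Nn (E *v ((l - 1) *\<^sub>R (G *v u)))"
      unfolding eq by (rule isn_tri[OF nn])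
    also have "\<dots> \<le> r^2 * exp r * R + exp r * (2 * (1 - \<epsilon>) * R)"
    proof (rule add_mono)
      show "Nn (L *v w - E *v w) \<le> r^2 * exp r * R"
        using ELb[of w] wR[OF u(1)] unfolding w_def
        by (smt (verit) mult_left_mono exp_ge_zero zero_le_power2 mult_nonneg_nonneg)
      have "Nn (E *v ((l - 1) *\<^sub>R (G *v u))) \<le> exp r * Nn ((l - 1) *\<^sub>R (G *v u))" by (rule Eb)
      also have "\<dots> = exp r * ((1 - l) * Nn (G *v u))" using l1 by (simp add: isn_scale[OF nn])
      also have "\<dots> \<le> exp r * ((1 - \<epsilon>) * (2 * R))"
        using le l1 GR[OF u(1)] nonneg[of "G *v u"] assms(6)
        by (intro mult_left_mono mult_mono) auto
      finally show "Nn (E *v ((l - 1) *\<^sub>R (G *v u))) \<le> exp r * (2 * (1 - \<epsilon>) * R)" by (simp add: algebra_simps)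
    qed
    finally show "(INF x\<in>Hset Nn Np A t c G \<epsilon>. Nn (x - y)) \<le> B"
      unfolding B_def by (rule inf_le_wit[OF xH _ nonneg])
  qed
  have "hdist Nn (Hset Nn Np A t c G \<epsilon>) ((\<lambda>x. E *v x) ` \<Omega>) \<le> B"
    unfolding hdist_def using S1 S2 by simp
  also have "B \<le> (2 * (1 - \<epsilon>) + r^2) * exp (T * a) * R"
  proof -
    have "exp r \<le> exp (T * a)" unfolding r_def using assms(8) a0 by (simp add: mult_right_mono)
    then have "(2 * (1 - \<epsilon>) + r^2) * exp r * R \<le> (2 * (1 - \<epsilon>) + r^2) * exp (T * a) * R"
      using R0 assms(6) by (intro mult_right_mono mult_left_mono) auto
    moreover have "B = (2 * (1 - \<epsilon>) + r^2) * exp r * R" unfolding B_def by (simp add: algebra_simps)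
    ultimately show ?thesis by simp
  qed
  finally show ?thesis unfolding E_def \<Omega>_def R_def r_def a_def .
qed
end
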